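(* Fix a point $\mathbf{x}'\in\Omega\subset\mathbb{R}^2$ and let $\mathbf{F}=[\mathbf{F}_1,\mathbf{F}_2]\in\mathbb{R}^{3\times 2}$ have $\operatorname{rank}(\mathbf{F})=2$. Set $$\mathbf{b}(\mathbf{F})=\frac{\mathbf{F}_1\times\mathbf{F}_2}{|\mathbf{F}_1\times\mathbf{F}_2|^2}\in\mathbb{R}^3 .$$ Then $$W_{str}(\mathbf{x}',\mathbf{F})=W_{3D}\big((\mathbf{x}',0),[\mathbf{F},\mathbf{b}(\mathbf{F})]\big),$$ where $[\mathbf{F},\mathbf{b}(\mathbf{F})]\in\mathbb{R}^{3\times3}$ is the matrix whose first two columns are those of $\mathbf{F}$ and whose third column is $\mathbf{b}(\mathbf{F})$.
   Context: Let $\Omega\subset\mathbb{R}^2$ be a bounded Lipschitz domain. At the point $\mathbf{x}'$ we are given scalars $s,s_0$ with $-1<s,s_0<\infty$ (values at $\mathbf{x}'$ of given functions $s,s_0\in L^\infty(\Omega)$) and a unit vector $\mathbf{m}\in\mathbb{S}^1\subset\mathbb{R}^2$ (the value at $\mathbf{x}'$ of the blueprinted director field). We identify $\mathbf{m}$ with $(\mathbf{m},0)^T\in\mathbb{R}^3$ whenever a vector in $\mathbb{R}^3$ is needed. Define $\lambda=\big(\tfrac{s+1}{s_0+1}\big)^{1/3}$. The 3D energy density. For $\mathbf{G}\in\mathbb{R}^{3\times3}$ with $\mathbf{G}\mathbf{m}\neq 0$, set $\mathbf{n}=\mathbf{G}\mathbf{m}/|\mathbf{G}\mathbf{m}|$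 and $$\mathbf{L}_{\mathbf{m}}=(s_0+1)^{-1/3}(\mathrm{Id}_3+s_0\,\mathbf{m}\otimes\mathbf{m}),\qquad \mathbf{L}_{\mathbf{n}}=(s+1)^{-1/3}(\mathrm{Id}_3+s\,\mathbf{n}\otimes\mathbf{n}).$$ Then $$W_{3D}\big((\mathbf{x}',0),\mathbf{G}\big)=\operatorname{tr}\big(\mathbf{G}^T\mathbf{L}_{\mathbf{n}}^{-1}\mathbf{G}\mathbf{L}_{\mathbf{m}}\big)-3 .$$ The stretching energy density. For $\mathbf{F}\in\mathbb{R}^{3\times2}$ of rank 2, let $\mathrm{I}(\mathbf{F})=\mathbf{F}^T\mathbf{F}$, $J(\mathbf{F})=\det\mathrm{I}(\mathbf{F})$ and $C_{\mathbf{m}}(\mathbf{F})=\mathbf{m}\cdot\mathrm{I}(\mathbf{F})\mathbf{m}$. Then $$W_{str}(\mathbf{x}',\mathbf{F})=\lambda\Big[\frac{1}{J(\mathbf{F})}+\frac{1}{s+1}\Big(\operatorname{tr}\mathrm{I}(\mathbf{F})+s_0\,C_{\mathbf{m}}(\mathbf{F})+s\,\frac{J(\mathbf{F})}{C_{\mathbf{m}}(\mathbf{F})}\Big)\Big]-3 .$$ *)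

theory Defs
  imports "HOL-Analysis.Analysis"
begin

definition emb3 :: "real^2 \<Rightarrow> real^3" where
  "emb3 m = vector [m$1, m$2, 0]"

definition outer :: "real^'n \<Rightarrow> real^'n \<Rightarrow> real^'n^'n" where
  "outer a b = (\<chi> i j. a$i * b$j)"

definition Lmat :: "real \<Rightarrow> real^3 \<Rightarrow> real^3^3" where
  "Lmat t v = ((t + 1) powr (-1/3)) *\<^sub>R (mat 1 + t *\<^sub>R outer v v)"

text \<open>The 3D energy density at (x',0), given the values s, s0 at x' and the director m.\<close>
definition W3D :: "real \<Rightarrow> real \<Rightarrow> real^2 \<Rightarrow> real^3^3 \<Rightarrow> real" where
  "W3D s s0 m G =
     (let n = (1 / norm (G *v emb3 m)) *\<^sub>R (G *v emb3 m)
      in trace (transpose G ** matrix_inv (Lmat s n) ** G ** Lmat s0 (emb3 m)) - 3)"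

definition FF1 :: "real^2^3 \<Rightarrow> real^2^2" where
  "FF1 F = transpose F ** F"

definition Wstr :: "real \<Rightarrow> real \<Rightarrow> real^2 \<Rightarrow> real^2^3 \<Rightarrow> real" where
  "Wstr s s0 m F =
     (let lam = ((s + 1) / (s0 + 1)) powr (1/3);
          J = det (FF1 F);
          C = m \<bullet> (FF1 F *v m)
      in lam * (1 / J + (1 / (s + 1)) * (trace (FF1 F) + s0 * C + s * J / C)) - 3)"

definition col1 :: "real^2^3 \<Rightarrow> real^3" where "col1 F = column 1 F"
definition col2 :: "real^2^3 \<Rightarrow> real^3" where "col2 F = column 2 F"

definition bvec :: "real^2^3 \<Rightarrow> real^3" where
  "bvec F = (1 / (norm (cross3 (col1 F) (col2 F)))\<^sup>2) *\<^sub>R (cross3 (col1 F) (col2 F))"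

definition augment :: "real^2^3 \<Rightarrow> real^3 \<Rightarrow> real^3^3" where
  "augment F b = (\<chi> i j. if j = 1 then F$i$1 else if j = 2 then F$i$2 else b$i)"

end

theory Submission
  imports Defs
begin

lemma tr_formula:
  fixes G :: "real^3^3" and v e :: "real^3"
  shows "trace (transpose G ** (c1 *\<^sub>R (mat 1 + \<beta> *\<^sub>R outer v v)) ** G ** (c2 *\<^sub>R (mat 1 + t *\<^sub>R outer e e)))
   = c1 * c2 * ((\<Sum>i\<in>UNIV. \<Sum>j\<in>UNIV. (G$i$j)^2) + t * ((G *v e) \<bullet> (G *v e)) + \<beta> * ((transpose G *v v) \<bullet> (transpose G *v v))
      + \<beta> * t * (v \<bullet> (G *v e))^2)"
  by (simp add: trace_def matrix_matrix_mult_def matrix_vector_mult_def transpose_def outer_def mat_def sum_3 inner_vec_def power2_eq_square algebra_simps)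

lemma matrix_inv_eq:
  fixes A B :: "real^'n^'n"
  assumes "A ** B = mat 1" "B ** A = mat 1"
  shows "matrix_inv A = B"
proof -
  have "\<exists>A'. A ** A' = mat 1 \<and> A' ** A = mat 1" using assms by blast
  then have h: "A ** matrix_inv A = mat 1 \<and> matrix_inv A ** A = mat 1"
    unfolding matrix_inv_def by (rule someI_ex)
  have "matrix_inv A = matrix_inv A ** (A ** B)" using assms by simp
  also have "\<dots> = (matrix_inv A ** A) ** B" by (simp add: matrix_mul_assoc)
  also have "\<dots> = B" using h by simp
  finally show ?thesis .
qed

lemma outer_scale: "outer (a *\<^sub>R v) (a *\<^sub>R v) = (a * a) *\<^sub>R outer (v::real^'n) v"
  by (simp add: outer_def vec_eq_iff)

lemma prod_gen:
  fixes v :: "real^3"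
  assumes "k \<noteq> 0"
  shows "(k *\<^sub>R (mat 1 + a *\<^sub>R outer v v)) ** ((1/k) *\<^sub>R (mat 1 + b *\<^sub>R outer v v)) = mat 1 + (a + b + a*b*(v \<bullet> v)) *\<^sub>R outer v v"
  using assms
  by (simp add: vec_eq_iff matrix_matrix_mult_def sum_3 outer_def mat_def forall_3 inner_vec_def algebra_simps)

lemma prod_gen2:
  fixes v :: "real^3"
  assumes "k \<noteq> 0"
  shows "((1/k) *\<^sub>R (mat 1 + b *\<^sub>R outer v v)) ** (k *\<^sub>R (mat 1 + a *\<^sub>R outer v v)) = mat 1 + (a + b + a*b*(v \<bullet> v)) *\<^sub>R outer v v"
  using assms
  by (simp add: vec_eq_iff matrix_matrix_mult_def sum_3 outer_def mat_def forall_3 inner_vec_def algebra_simps)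

lemma Lmat_inv:
  fixes v :: "real^3"
  assumes "v \<bullet> v = c" "c \<noteq> 0" "t + 1 \<noteq> 0" "k \<noteq> 0"
  shows "matrix_inv (k *\<^sub>R (mat 1 + (t / c) *\<^sub>R outer v v)) = (1/k) *\<^sub>R (mat 1 + (- t / ((t+1)*c)) *\<^sub>R outer v v)"
proof (rule matrix_inv_eq)
  have z: "t / c + - t / ((t+1)*c) + (t/c) * (- t / ((t+1)*c)) * c = 0"
    using assms(2,3) by (simp add: divide_simps) (simp add: algebra_simps)
  show "k *\<^sub>R (mat 1 + (t / c) *\<^sub>R outer v v) ** ((1/k) *\<^sub>R (mat 1 + (- t / ((t+1)*c)) *\<^sub>R outer v v)) = mat 1"
    unfolding prod_gen[OF assms(4)] assms(1) z by simp
  show "(1/k) *\<^sub>R (mat 1 + (- t / ((t+1)*c)) *\<^sub>R outer v v) ** (k *\<^sub>R (mat 1 + (t / c) *\<^sub>R outer v v)) = mat 1"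
    unfolding prod_gen2[OF assms(4)] assms(1) z by simp
qed


lemma rank_cross:
  fixes F :: "real^2^3"
  assumes "rank F = 2"
  shows "cross3 (col1 F) (col2 F) \<noteq> 0"
proof
  assume "cross3 (col1 F) (col2 F) = 0"
  then have col: "collinear {0, col1 F, col2 F}" by (simp add: cross_eq_0)
  have cols: "columns F = {col1 F, col2 F}"
    unfolding columns_def col1_def col2_def
    apply auto
    subgoal for i using exhaust_2[of i] by auto
    done
  obtain u where u: "columns F \<subseteq> span {u}"
    using col unfolding collinear_lemma cols
    by (metis insert_subset span_base span_zero span_mul singletonI subsetI insertE empty_iff span_mul[of _ "{_}"])
  have "dim (columns F) \<le> card {u}" by (rule dim_le_card[OF u]) simp
  then have "rank F \<le> 1" by (simp add: column_rank_def)
  with assms show False by simp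
qed


lemma final_id:
  fixes T J C s s0 :: real
  assumes "C \<noteq> 0" "J \<noteq> 0" "s + 1 \<noteq> 0"
  shows "T + 1 / J + s0 * C + (- s / ((s+1) * C)) * (C * T - J) + (- s / ((s+1) * C)) * s0 * C^2
       = 1 / J + (1 / (s + 1)) * (T + s0 * C + s * J / C)"
  using assms by (simp add: divide_simps) (simp add: algebra_simps power2_eq_square)

theorem lemma2p1:
  fixes s s0 :: real and m :: "real^2" and F :: "real^2^3"
  assumes "-1 < s" and "-1 < s0"
    and "norm m = 1"
    and "rank F = 2"
  shows "Wstr s s0 m F = W3D s s0 m (augment F (bvec F))"
proof -
  let ?x1 = "F$1$1" and ?x2 = "F$2$1" and ?x3 = "F$3$1"
  let ?y1 = "F$1$2" and ?y2 = "F$2$2" and ?y3 = "F$3$2"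
  let ?p = "m$1" and ?q = "m$2"
  let ?T = "?x1^2 + ?x2^2 + ?x3^2 + ?y1^2 + ?y2^2 + ?y3^2"
  let ?J = "(?x1^2 + ?x2^2 + ?x3^2) * (?y1^2 + ?y2^2 + ?y3^2) - (?x1*?y1 + ?x2*?y2 + ?x3*?y3)^2"
  let ?v1 = "?x1 * ?p + ?y1 * ?q" and ?v2 = "?x2 * ?p + ?y2 * ?q" and ?v3 = "?x3 * ?p + ?y3 * ?q"
  let ?C = "?v1^2 + ?v2^2 + ?v3^2"
  let ?N = "cross3 (col1 F) (col2 F)"
  let ?G = "augment F (bvec F)"
  let ?e = "emb3 m"
  let ?v = "F *v m"
  have hT: "trace (FF1 F) = ?T"
    by (simp add: FF1_def trace_def sum_2 sum_3 matrix_matrix_mult_def transpose_def power2_eq_square)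
  have hJ: "det (FF1 F) = ?J"
    by (simp add: FF1_def det_2 sum_3 matrix_matrix_mult_def transpose_def power2_eq_square algebra_simps)
  have hC: "m \<bullet> (FF1 F *v m) = ?C"
    by (simp add: FF1_def inner_vec_def sum_2 sum_3 matrix_matrix_mult_def matrix_vector_mult_def transpose_def power2_eq_square algebra_simps)
  have hN: "(norm ?N)^2 = ?J"
    unfolding power2_norm_eq_inner by (simp add: cross3_def col1_def col2_def column_def inner_vec_def sum_3 power2_eq_square algebra_simps)
  have hpq: "?p^2 + ?q^2 = 1"
  proof -
    have "(norm m)^2 = 1" using assms(3) by simp
    then show ?thesis unfolding power2_norm_eq_inner by (simp add: inner_vec_def sum_2 power2_eq_square)
  qed
  have hJpos: "?J > 0"
    using rank_cross[OF assms(4)] hN by (metis zero_less_norm_iff zero_less_power)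
  have hCT: "(?x1*?v1 + ?x2*?v2 + ?x3*?v3)^2 + (?y1*?v1 + ?y2*?v2 + ?y3*?v3)^2 = ?C * ?T - ?J * (?p^2 + ?q^2)"
    by (simp add: power2_eq_square algebra_simps)
  have hCne: "?C \<noteq> 0"
  proof
    assume "?C = 0"
    with hCT hpq have "(?x1*?v1 + ?x2*?v2 + ?x3*?v3)^2 + (?y1*?v1 + ?y2*?v2 + ?y3*?v3)^2 = - ?J" by simp
    moreover have "(?x1*?v1 + ?x2*?v2 + ?x3*?v3)^2 + (?y1*?v1 + ?y2*?v2 + ?y3*?v3)^2 \<ge> 0" by simp
    ultimately show False using hJpos by linarith
  qed
  have hGe: "?G *v ?e = ?v"
    by (simp add: vec_eq_iff forall_3 matrix_vector_mult_def sum_3 sum_2 augment_def emb3_def)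
  have hvv: "?v \<bullet> ?v = ?C"
    by (simp add: inner_vec_def sum_3 sum_2 matrix_vector_mult_def power2_eq_square)
  have hnv: "norm ?v * norm ?v = ?C"
    using hvv by (metis power2_eq_square power2_norm_eq_inner)
  have hsq: "(\<Sum>i\<in>UNIV. \<Sum>j\<in>UNIV. (?G$i$j)^2) = ?T + 1 / ?J"
  proof -
    have "(\<Sum>i\<in>UNIV. \<Sum>j\<in>UNIV. (?G$i$j)^2) = ?T + bvec F \<bullet> bvec F"
      by (simp add: sum_3 augment_def inner_vec_def power2_eq_square)
    moreover have "bvec F \<bullet> bvec F = 1 / ?J"
      using hN hJpos by (simp add: bvec_def power2_norm_eq_inner[symmetric] power2_eq_square)
    ultimately show ?thesis by simp
  qed
  have hbv: "bvec F \<bullet> ?v = 0"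
  proof -
    have "?N \<bullet> ?v = 0"
      by (simp add: cross3_def col1_def col2_def column_def inner_vec_def sum_3 sum_2 matrix_vector_mult_def algebra_simps)
    then show ?thesis by (simp add: bvec_def)
  qed
  have htr: "(transpose ?G *v ?v) \<bullet> (transpose ?G *v ?v) = ?C * ?T - ?J"
  proof -
    have "(transpose ?G *v ?v) \<bullet> (transpose ?G *v ?v) = (?x1*?v1 + ?x2*?v2 + ?x3*?v3)^2 + (?y1*?v1 + ?y2*?v2 + ?y3*?v3)^2 + (bvec F \<bullet> ?v)^2"
      by (simp add: inner_vec_def sum_3 sum_2 matrix_vector_mult_def transpose_def augment_def power2_eq_square)
    then show ?thesis using hbv hCT hpq by simp
  qed
  have hve: "?v \<bullet> (?G *v ?e) = ?C" using hGe hvv by simp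
  define k where "k = (s + 1) powr (1/3)"
  define k0 where "k0 = (s0 + 1) powr (1/3)"
  have kpos: "k > 0" "k0 > 0" using assms(1,2) by (auto simp: k_def k0_def)
  have hk': "(s + 1) powr (-1/3) = 1 / k" using assms(1) by (simp add: k_def powr_minus_divide)
  have hk0': "(s0 + 1) powr (-1/3) = 1 / k0" using assms(2) by (simp add: k0_def powr_minus_divide)
  have hlam: "((s + 1) / (s0 + 1)) powr (1/3) = k / k0"
    using assms(1,2) by (simp add: k_def k0_def powr_divide)
  have hLn: "Lmat s ((1 / norm ?v) *\<^sub>R ?v) = (1/k) *\<^sub>R (mat 1 + (s / ?C) *\<^sub>R outer ?v ?v)"
  proof -
    have "1 / norm ?v * (1 / norm ?v) = 1 / (norm ?v * norm ?v)" by simp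
    then have hnv2: "1 / norm ?v * (1 / norm ?v) = 1 / ?C" unfolding hnv .
    show ?thesis unfolding Lmat_def hk' outer_scale hnv2 scaleR_scaleR by simp
  qed
  have hLinv: "matrix_inv (Lmat s ((1 / norm ?v) *\<^sub>R ?v)) = (1 / (1/k)) *\<^sub>R (mat 1 + (- s / ((s+1) * ?C)) *\<^sub>R outer ?v ?v)"
    unfolding hLn by (rule Lmat_inv[OF hvv hCne]) (use assms(1) kpos in auto)
  have hLm: "Lmat s0 ?e = (1/k0) *\<^sub>R (mat 1 + s0 *\<^sub>R outer ?e ?e)"
    unfolding Lmat_def hk0' ..
  have "W3D s s0 m ?G = (1 / (1/k)) * (1/k0) * (?T + 1 / ?J + s0 * ?C + (- s / ((s+1) * ?C)) * (?C * ?T - ?J)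
      + (- s / ((s+1) * ?C)) * s0 * ?C^2) - 3"
    unfolding W3D_def Let_def hGe hLinv hLm tr_formula hsq htr hve hvv ..
  moreover have "Wstr s s0 m F = k / k0 * (1 / ?J + (1 / (s + 1)) * (?T + s0 * ?C + s * ?J / ?C)) - 3"
    unfolding Wstr_def Let_def hlam hJ hC hT ..
  moreover have "(1 / (1/k)) * (1/k0) * (?T + 1 / ?J + s0 * ?C + (- s / ((s+1) * ?C)) * (?C * ?T - ?J)
      + (- s / ((s+1) * ?C)) * s0 * ?C^2) = k / k0 * (1 / ?J + (1 / (s + 1)) * (?T + s0 * ?C + s * ?J / ?C))"
  proof -
    have "?T + 1 / ?J + s0 * ?C + (- s / ((s+1) * ?C)) * (?C * ?T - ?J) + (- s / ((s+1) * ?C)) * s0 * ?C^2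
       = 1 / ?J + (1 / (s + 1)) * (?T + s0 * ?C + s * ?J / ?C)"
      using hCne hJpos assms(1) by (intro final_id) auto
    then show ?thesis by simp
  qed
  ultimately show ?thesis by (simp only:)
qed

end
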